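(* Let $d=1$, fix $y\in\mathbb{R}$ and measurable $g:\mathbb{R}\to\mathbb{R}$. Let $X,V$ be independent real random variables, $Y=X+V$, where $P_V$ has a Lebesgue density $f_V\in C_0^1(\mathbb{R};\mathbb{R})$ and $\varphi_V(\omega)\neq0$ for Lebesgue-a.e. $\omega$. Assume $\lambda_{g,V,y}(x)=g(x)f_V(y-x)\in\Xi^0(\mathbb{R};\mathbb{C})$ and $\widetilde{\lambda}_{g,V,y}\in L^1(\mathbb{R};\mathbb{C})$. Suppose there are $c_{g,V,y}\in\mathbb{C}$ and measurable $k_{g,V,y}:(0,\infty)\to\mathbb{C}$ with $\int_0^1t|k_{g,V,y}(t)|dt<\infty$, $\int_1^\infty|k_{g,V,y}(t)|dt<\infty$, and \[ \mathcal{Q}_{g,V,y}(\omega)=e^{i\omega y}\Bigl(c_{g,V,y}+\int_0^\infty(1-e^{-i\omega t})k_{g,V,y}(t)\,dt\Bigr)\quad\text{for Lebesgue-a.e. }\omega. \] Then for every $f\in\mathcal{A}_V(\mathbb{R})$, \[ \mathcal{T}_{g,V,y}[f]=c_{g,V,y}f(y)+\int_0^\infty\bigl(f(y)-f(y-t)\bigr)k_{g,V,y}(t)\,dt, \] and in particular, whenever $f_Y(y)>0$, \[ \mathbb{E}[g(X)\mid Y=y]=\frac{1}{f_Y(y)}\Bigl\{c_{g,V,y}f_Y(y)+\int_0^\infty\bigl(f_Y(y)-f_Y(y-t)\bigr)k_{g,V,y}(t)\,dt\Bigr\}. \]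
   Context: $\widetilde\psi(\omega)=\int e^{i\omega x}\psi(x)dx$; $\varphi_V(\omega)=\mathbb{E}[e^{i\omega V}]$. $C_0^1$: $C^1$ functions with the function and derivative vanishing at infinity; $\Xi^0=C_0\cap L^1$. $\mathcal{Q}_{g,V,y}(\omega)=\widetilde{\lambda}_{g,V,y}(\omega)/\varphi_V(-\omega)$ where $\varphi_V(-\omega)\ne0$, and $0$ otherwise. $\mathcal{A}_V(\mathbb{R})=\{f_V*\mu:\mu\text{ finite signed Radon measure}\}$ with $\|f_V*\mu\|_{\mathcal{A}_V}=\|\mu\|_{TV}$; $\mathcal{T}_{g,V,y}$ is the unique continuous linear functional on $\mathcal{A}_V$ with $\mathcal{T}_{g,V,y}[f_V*\mu]=\int\lambda_{g,V,y}\,d\mu$. $f_Y=f_V*P_X$ and $\mathbb{E}[g(X)\mid Y=y]=f_Y(y)^{-1}\int g(x)f_V(y-x)dP_X(x)$. *)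

theory Defs
  imports "HOL-Probability.Probability"
begin

definition fourier :: "(real \<Rightarrow> complex) \<Rightarrow> real \<Rightarrow> complex" where
  "fourier \<psi> \<omega> = (CLINT x|lborel. iexp (\<omega> * x) * \<psi> x)"

definition C0_1 :: "(real \<Rightarrow> real) \<Rightarrow> bool" where
  "C0_1 f \<longleftrightarrow> (\<exists>f'. (\<forall>x. (f has_real_derivative f' x) (at x)) \<and> continuous_on UNIV f'
      \<and> (f \<longlongrightarrow> 0) at_infinity \<and> (f' \<longlongrightarrow> 0) at_infinity)"

definition Xi0 :: "(real \<Rightarrow> complex) \<Rightarrow> bool" where
  "Xi0 \<psi> \<longleftrightarrow> continuous_on UNIV \<psi> \<and> (\<psi> \<longlongrightarrow> 0) at_infinity \<and> integrable lborel \<psi>"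

definition lam :: "(real \<Rightarrow> real) \<Rightarrow> (real \<Rightarrow> real) \<Rightarrow> real \<Rightarrow> real \<Rightarrow> complex" where
  "lam g fV y x = complex_of_real (g x * fV (y - x))"

definition Qfun :: "(real \<Rightarrow> real) \<Rightarrow> (real \<Rightarrow> real) \<Rightarrow> real measure \<Rightarrow> real \<Rightarrow> real \<Rightarrow> complex" where
  "Qfun g fV PV y \<omega> = (if char PV (-\<omega>) \<noteq> 0 then fourier (lam g fV y) \<omega> / char PV (-\<omega>) else 0)"

text \<open>Convolution f_V * mu of f_V with a finite signed measure mu = mu1 - mu2 (Jordan decomposition).\<close>
definition conv_signed :: "(real \<Rightarrow> real) \<Rightarrow> real measure \<Rightarrow> real measure \<Rightarrow> real \<Rightarrow> real" where
  "conv_signed fV \<mu>1 \<mu>2 x = (\<integral>z. fV (x - z) \<partial>\<mu>1) - (\<integral>z. fV (x - z) \<partial>\<mu>2)"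

text \<open>T_{g,V,y}[f_V * mu] = integral of lambda d mu, for mu = mu1 - mu2.\<close>
definition T_functional :: "(real \<Rightarrow> real) \<Rightarrow> (real \<Rightarrow> real) \<Rightarrow> real \<Rightarrow> real measure \<Rightarrow> real measure \<Rightarrow> complex" where
  "T_functional g fV y \<mu>1 \<mu>2 = (CLINT x|\<mu>1. lam g fV y x) - (CLINT x|\<mu>2. lam g fV y x)"

definition fY :: "(real \<Rightarrow> real) \<Rightarrow> real measure \<Rightarrow> real \<Rightarrow> real" where
  "fY fV PX y = (\<integral>x. fV (y - x) \<partial>PX)"

definition cond_exp_at :: "(real \<Rightarrow> real) \<Rightarrow> (real \<Rightarrow> real) \<Rightarrow> real measure \<Rightarrow> real \<Rightarrow> real" where
  "cond_exp_at g fV PX y = inverse (fY fV PX y) * (\<integral>x. g x * fV (y - x) \<partial>PX)"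

end

theory Submission
  imports Defs
begin

lemma (in pair_sigma_finite) integrable_prod_bound:
  fixes F :: "_ \<Rightarrow> 'z::{banach, second_countable_topology}"
  assumes Fm: "F \<in> borel_measurable (M1 \<Otimes>\<^sub>M M2)" and a: "integrable M1 a" and b: "integrable M2 b"
    and bd: "\<And>x y. x \<in> space M1 \<Longrightarrow> y \<in> space M2 \<Longrightarrow> norm (F (x,y)) \<le> a x * b y"
  shows "integrable (M1 \<Otimes>\<^sub>M M2) F"
proof -
  have am[measurable]: "a \<in> borel_measurable M1" using a by auto
  have bm[measurable]: "b \<in> borel_measurable M2" using b by auto
  have "integrable (M1 \<Otimes>\<^sub>M M2) (\<lambda>p. a (fst p) * b (snd p))"
  proof (rule Fubini_integrable)
    show "integrable M1 (\<lambda>x. \<integral>y. norm (a (fst (x, y)) * b (snd (x, y))) \<partial>M2)"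
      by (simp add: abs_mult integrable_abs[OF a] b)
    show "AE x in M1. integrable M2 (\<lambda>y. a (fst (x, y)) * b (snd (x, y)))"
      using b by auto
  qed simp
  then show ?thesis
    by (rule Bochner_Integration.integrable_bound[OF _ Fm]) (use bd in \<open>auto simp: space_pair_measure intro!: AE_I2 
         intro: order_trans[OF _ abs_ge_self]\<close>)
qed

lemma bounded_vanishing:
  fixes f :: "real \<Rightarrow> 'a::real_normed_vector"
  assumes c: "continuous_on UNIV f" and l: "(f \<longlongrightarrow> 0) at_infinity"
  shows "\<exists>B. \<forall>x. norm (f x) \<le> B"
proof -
  have "eventually (\<lambda>x. dist (f x) 0 < 1) at_infinity" using tendstoD[OF l, of 1] by simp
  then obtain R where R: "\<And>x. norm x \<ge> R \<Longrightarrow> norm (f x) < 1"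
    unfolding eventually_at_infinity by auto
  have "compact (f ` cball 0 R)"
    by (rule compact_continuous_image) (auto intro: continuous_on_subset[OF c])
  then obtain B where B: "\<And>y. y \<in> f ` cball 0 R \<Longrightarrow> norm y \<le> B"
    using compact_imp_bounded bounded_iff by metis
  show ?thesis
  proof (intro exI allI)
    fix x
    show "norm (f x) \<le> max B 1"
    proof (cases "norm x \<ge> R")
      case True then show ?thesis using R[of x] by auto
    next
      case False then show ?thesis using B[of "f x"] by (auto simp: dist_norm)
    qed
  qed
qed

lemma iexp_meas[measurable]: "iexp \<in> borel_measurable borel"
  by (intro borel_measurable_continuous_onI continuous_at_imp_continuous_on) auto

lemma fubini_test:
  fixes h \<Psi> :: "real \<Rightarrow> complex"
  assumes h: "integrable lborel h" and P: "integrable lborel \<Psi>"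
  shows "(\<integral>z. h z * (\<integral>\<omega>. iexp (-(\<omega>*z)) * \<Psi> \<omega> \<partial>lborel) \<partial>lborel)
       = (\<integral>\<omega>. \<Psi> \<omega> * (\<integral>z. h z * iexp (-(\<omega>*z)) \<partial>lborel) \<partial>lborel)"
    and "integrable lborel (\<lambda>\<omega>. \<Psi> \<omega> * (\<integral>z. h z * iexp (-(\<omega>*z)) \<partial>lborel))"
proof -
  have ps: "pair_sigma_finite lborel lborel" by (simp add: pair_sigma_finite_def sigma_finite_lborel)
  have [measurable]: "h \<in> borel_measurable borel" "\<Psi> \<in> borel_measurable borel" using h P by auto
  have I: "integrable (lborel \<Otimes>\<^sub>M lborel) (\<lambda>(z,\<omega>). h z * iexp (-(\<omega>*z)) * \<Psi> \<omega>)"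
    by (rule pair_sigma_finite.integrable_prod_bound[OF ps, where a="\<lambda>z. norm (h z)" and b="\<lambda>\<omega>. norm (\<Psi> \<omega>)"])
       (auto simp: norm_mult h P)
  have "(\<integral>z. h z * (\<integral>\<omega>. iexp (-(\<omega>*z)) * \<Psi> \<omega> \<partial>lborel) \<partial>lborel)
      = (\<integral>z. (\<integral>\<omega>. h z * iexp (-(\<omega>*z)) * \<Psi> \<omega> \<partial>lborel) \<partial>lborel)"
    by (simp add: mult.assoc)
  also have "\<dots> = (\<integral>\<omega>. (\<integral>z. h z * iexp (-(\<omega>*z)) * \<Psi> \<omega> \<partial>lborel) \<partial>lborel)"
    using lborel_pair.Fubini_integral[OF I] by simp
  also have "\<dots> = (\<integral>\<omega>. \<Psi> \<omega> * (\<integral>z. h z * iexp (-(\<omega>*z)) \<partial>lborel) \<partial>lborel)"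
    by (simp add: mult.commute)
  finally show "(\<integral>z. h z * (\<integral>\<omega>. iexp (-(\<omega>*z)) * \<Psi> \<omega> \<partial>lborel) \<partial>lborel)
       = (\<integral>\<omega>. \<Psi> \<omega> * (\<integral>z. h z * iexp (-(\<omega>*z)) \<partial>lborel) \<partial>lborel)" .
  have "integrable lborel (\<lambda>\<omega>. (\<integral>z. h z * iexp (-(\<omega>*z)) * \<Psi> \<omega> \<partial>lborel))"
    using lborel_pair.integrable_snd[OF I] by simp
  then show "integrable lborel (\<lambda>\<omega>. \<Psi> \<omega> * (\<integral>z. h z * iexp (-(\<omega>*z)) \<partial>lborel))"
    by (simp add: mult.commute)
qed

lemma std_normal_char_integral:
  "(\<integral>u. std_normal_density u *\<^sub>R iexp (t * u) \<partial>lborel) = complex_of_real (exp (- (t^2) / 2))"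
proof -
  have "char std_normal_distribution t = (\<integral>u. std_normal_density u *\<^sub>R iexp (t * u) \<partial>lborel)"
    unfolding char_def by (subst integral_density) (auto simp: normal_density_nonneg)
  then show ?thesis using char_std_normal_distribution by metis
qed

lemma iexp_add': "iexp a * iexp b = iexp (a + b)"
  by (simp add: exp_add[symmetric] algebra_simps)

lemma gauss_fourier:
  fixes r z z0 :: real assumes r: "r > 0"
  shows "(\<integral>\<omega>. iexp (-(\<omega>*z)) * (complex_of_real (std_normal_density (\<omega>/r) / sqrt (2*pi)) * iexp (\<omega>*z0)) \<partial>lborel)
     = complex_of_real (r * std_normal_density (r*(z - z0)))"
proof -
  have "(\<integral>\<omega>. iexp (-(\<omega>*z)) * (complex_of_real (std_normal_density (\<omega>/r) / sqrt (2*pi)) * iexp (\<omega>*z0)) \<partial>lborel)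
     = \<bar>r\<bar> *\<^sub>R (\<integral>u. iexp (-((0 + r*u)*z)) * (complex_of_real (std_normal_density ((0 + r*u)/r) / sqrt (2*pi)) * iexp ((0 + r*u)*z0)) \<partial>lborel)"
    using r by (intro lborel_integral_real_affine) simp
  also have "(\<lambda>u. iexp (-((0 + r*u)*z)) * (complex_of_real (std_normal_density ((0 + r*u)/r) / sqrt (2*pi)) * iexp ((0 + r*u)*z0)))
      = (\<lambda>u. (1 / sqrt (2*pi)) *\<^sub>R (std_normal_density u *\<^sub>R iexp ((r*(z0 - z)) * u)))"
  proof
    fix u
    have "iexp (-((0 + r*u)*z)) * iexp ((0 + r*u)*z0) = iexp (-((0 + r*u)*z) + (0 + r*u)*z0)"
      by (rule iexp_add')
    also have "-((0 + r*u)*z) + (0 + r*u)*z0 = (r*(z0 - z)) * u" by (simp add: algebra_simps)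
    finally have "iexp (-((0 + r*u)*z)) * iexp ((0 + r*u)*z0) = iexp ((r*(z0 - z)) * u)" .
    then show "iexp (-((0 + r*u)*z)) * (complex_of_real (std_normal_density ((0 + r*u)/r) / sqrt (2*pi)) * iexp ((0 + r*u)*z0))
      = (1 / sqrt (2*pi)) *\<^sub>R (std_normal_density u *\<^sub>R iexp ((r*(z0 - z)) * u))"
      using r by (simp add: scaleR_conv_of_real field_simps)
  qed
  also have "\<bar>r\<bar> *\<^sub>R (\<integral>u. (1 / sqrt (2*pi)) *\<^sub>R (std_normal_density u *\<^sub>R iexp ((r*(z0 - z)) * u)) \<partial>lborel)
     = \<bar>r\<bar> *\<^sub>R ((1 / sqrt (2*pi)) *\<^sub>R complex_of_real (exp (- ((r*(z0 - z))^2) / 2)))"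
    by (simp only: integral_scaleR_right std_normal_char_integral)
  also have "\<dots> = complex_of_real (r * std_normal_density (r*(z - z0)))"
    using r by (simp add: normal_density_def scaleR_conv_of_real power2_eq_square algebra_simps)
  finally show ?thesis .
qed

lemma std_normal_integral: "(\<integral>x. std_normal_density x \<partial>lborel) = 1"
  using has_bochner_integral_integral_eq[OF std_normal_moment_even[of 0]] by simp

lemma gauss_integrable_scaled:
  assumes r: "r > 0"
  shows "integrable lborel (\<lambda>\<omega>. std_normal_density (\<omega>/r))"
    and "integrable lborel (\<lambda>\<omega>. \<bar>\<omega>\<bar> * std_normal_density (\<omega>/r))"
proof -
  have "integrable lborel (\<lambda>x. std_normal_density (0 + (1/r)*x))"
    using r by (intro lborel_integrable_real_affine) auto
  then show "integrable lborel (\<lambda>\<omega>. std_normal_density (\<omega>/r))" by simp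
  have "integrable lborel (\<lambda>x. (\<lambda>x. std_normal_density x * \<bar>x\<bar>^1) (0 + (1/r)*x))"
    using r by (intro lborel_integrable_real_affine integrable_std_normal_moment_abs) auto
  then have "integrable lborel (\<lambda>x. r * (std_normal_density (x/r) * \<bar>x/r\<bar>))"
    by (intro integrable_mult_right) simp
  then show "integrable lborel (\<lambda>\<omega>. \<bar>\<omega>\<bar> * std_normal_density (\<omega>/r))"
    using r by (simp add: abs_div mult.commute)
qed

lemma gauss_integrable_shift:
  assumes r: "r > 0"
  shows "integrable lborel (\<lambda>z. r * std_normal_density (r*(z - z0)))"
proof -
  have "integrable lborel (\<lambda>x. std_normal_density (- r*z0 + r*x))"
    using r by (intro lborel_integrable_real_affine) auto
  then show ?thesis by (intro integrable_mult_right) (simp add: algebra_simps)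
qed

lemma approx_id:
  fixes h :: "real \<Rightarrow> complex"
  assumes hm[measurable]: "h \<in> borel_measurable borel" and hb: "\<And>x. norm (h x) \<le> Bh"
    and hc: "isCont h z0"
  shows "(\<lambda>n. \<integral>z. h z * complex_of_real (real (Suc n) * std_normal_density (real (Suc n)*(z - z0))) \<partial>lborel)
         \<longlonglongrightarrow> h z0"
proof -
  have eq: "(\<integral>z. h z * complex_of_real (r * std_normal_density (r*(z - z0))) \<partial>lborel)
      = (\<integral>w. h (z0 + w/r) * complex_of_real (std_normal_density w) \<partial>lborel)" if r: "r > 0" for r
  proof -
    have "(\<integral>z. h z * complex_of_real (r * std_normal_density (r*(z - z0))) \<partial>lborel)
      = \<bar>1/r\<bar> *\<^sub>R (\<integral>w. h (z0 + (1/r)*w) * complex_of_real (r * std_normal_density (r*((z0 + (1/r)*w) - z0))) \<partial>lborel)"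
      using r by (intro lborel_integral_real_affine) simp
    also have "\<dots> = (\<integral>w. h (z0 + w/r) * complex_of_real (std_normal_density w) \<partial>lborel)"
    proof -
      have e1: "(\<lambda>w. h (z0 + (1/r)*w) * complex_of_real (r * std_normal_density (r*((z0 + (1/r)*w) - z0))))
          = (\<lambda>w. complex_of_real r * (h (z0 + w/r) * complex_of_real (std_normal_density w)))"
        using r by (simp add: field_simps)
      show ?thesis
        unfolding e1 integral_mult_right_zero using r by (simp add: scaleR_conv_of_real)
    qed
    finally show ?thesis .
  qed
  have Gi: "integrable lborel (\<lambda>w. Bh * std_normal_density w)" by auto
  have "(\<lambda>n. \<integral>w. h (z0 + w/real (Suc n)) * complex_of_real (std_normal_density w) \<partial>lborel)
        \<longlonglongrightarrow> (\<integral>w. h z0 * complex_of_real (std_normal_density w) \<partial>lborel)"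
  proof (rule integral_dominated_convergence[OF _ _ Gi])
    show "AE x in lborel. (\<lambda>n. h (z0 + x/real (Suc n)) * complex_of_real (std_normal_density x)) \<longlonglongrightarrow> h z0 * complex_of_real (std_normal_density x)"
    proof (intro AE_I2 tendsto_mult tendsto_const)
      fix x :: real
      have "(\<lambda>n. z0 + x/real (Suc n)) \<longlonglongrightarrow> z0 + 0"
        by (intro tendsto_add tendsto_const LIMSEQ_Suc[OF lim_const_over_n])
      then show "(\<lambda>n. h (z0 + x/real (Suc n))) \<longlonglongrightarrow> h z0"
        using isCont_tendsto_compose[OF hc] by simp
    qed
    show "AE x in lborel. norm (h (z0 + x/real (Suc n)) * complex_of_real (std_normal_density x)) \<le> Bh * std_normal_density x" for n
      by (intro AE_I2) (simp add: norm_mult mult_right_mono hb)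
  qed simp_all
  also have "(\<integral>w. h z0 * complex_of_real (std_normal_density w) \<partial>lborel) = h z0"
    by (simp add: std_normal_integral)
  finally have lim: "(\<lambda>n. \<integral>w. h (z0 + w/real (Suc n)) * complex_of_real (std_normal_density w) \<partial>lborel) \<longlonglongrightarrow> h z0" .
  have e: "\<And>n. (\<integral>z. h z * complex_of_real (real (Suc n) * std_normal_density (real (Suc n)*(z - z0))) \<partial>lborel)
     = (\<integral>w. h (z0 + w/real (Suc n)) * complex_of_real (std_normal_density w) \<partial>lborel)"
    by (rule eq) simp
  show ?thesis unfolding e by (rule lim)
qed

lemma norm_1_iexp: "norm (1 - iexp x) \<le> \<bar>x\<bar>" "norm (1 - iexp x) \<le> 2"
proof -
  have "cmod (iexp x - (\<Sum>k \<le> 0. (\<i> * x)^k / fact k)) \<le> \<bar>x\<bar>^(Suc 0) / fact (Suc 0)"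
    by (rule iexp_approx1)
  then show "norm (1 - iexp x) \<le> \<bar>x\<bar>" by (simp add: norm_minus_commute)
  have "norm (1 - iexp x) \<le> norm (1::complex) + norm (iexp x)" by (rule norm_triangle_ineq4)
  then show "norm (1 - iexp x) \<le> 2" by simp
qed

locale prop9_setup =
  fixes fV :: "real \<Rightarrow> real" and \<phi> :: "real \<Rightarrow> complex" and lamf :: "real \<Rightarrow> complex"
    and kk :: "real \<Rightarrow> complex" and y :: real and c :: complex and B L Bl :: real
  assumes fV_cont: "continuous_on UNIV fV"
    and fV_B: "\<And>x. \<bar>fV x\<bar> \<le> B"
    and fV_L: "\<And>a b. \<bar>fV a - fV b\<bar> \<le> L * \<bar>a - b\<bar>"
    and fV_int: "integrable lborel fV"
    and phi_def: "\<And>\<omega>. \<phi> \<omega> = (\<integral>x. fV x *\<^sub>R iexp (\<omega> * x) \<partial>lborel)"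
    and phi_bd: "\<And>\<omega>. norm (\<phi> \<omega>) \<le> 1"
    and kk_meas: "kk \<in> borel_measurable borel"
    and kk_zero: "\<And>t. t \<le> 0 \<Longrightarrow> kk t = 0"
    and m_int: "integrable lborel (\<lambda>t. min 1 t * norm (kk t))"
    and lam_cont: "continuous_on UNIV lamf"
    and lam_int: "integrable lborel lamf"
    and lam_B: "\<And>x. norm (lamf x) \<le> Bl"
    and hypA: "AE \<omega> in lborel. fourier lamf (-\<omega>) =
       iexp (-(\<omega>*y)) * \<phi> \<omega> * (c + (\<integral>t. (1 - iexp (\<omega>*t)) * kk t \<partial>lborel))"

context prop9_setup
begin

lemma fV_meas[measurable]: "fV \<in> borel_measurable borel"
  using fV_cont by (rule borel_measurable_continuous_onI)

lemma kk_meas'[measurable]: "kk \<in> borel_measurable borel" by (rule kk_meas)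

lemma lam_meas[measurable]: "lamf \<in> borel_measurable borel"
  using lam_cont by (rule borel_measurable_continuous_onI)

lemma B_nn: "B \<ge> 0" using fV_B[of 0] by simp
lemma L_nn: "L \<ge> 0" using fV_L[of 1 0] by simp

lemma D_bound: "norm (complex_of_real (fV a - fV (a - t)) * kk t) \<le> (2*B + L) * (min 1 t * norm (kk t))"
proof (cases "t > 0")
  case False then show ?thesis using kk_zero[of t] by simp
next
  case True
  have "\<bar>fV a - fV (a - t)\<bar> \<le> (2*B + L) * min 1 t"
  proof (cases "t \<le> 1")
    case True
    then have "\<bar>fV a - fV (a - t)\<bar> \<le> L * t" using fV_L[of a "a - t"] \<open>t > 0\<close> by simp
    also have "\<dots> \<le> (2*B + L) * t" using B_nn \<open>t > 0\<close> by (simp add: mult_right_mono)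
    finally show ?thesis using True by simp
  next
    case False
    have "\<bar>fV a - fV (a - t)\<bar> \<le> \<bar>fV a\<bar> + \<bar>fV (a - t)\<bar>" by linarith
    also have "\<dots> \<le> 2*B" using fV_B[of a] fV_B[of "a - t"] by linarith
    finally show ?thesis using False L_nn by simp
  qed
  note bd = this
  have "norm (complex_of_real (fV a - fV (a - t)) * kk t) = \<bar>fV a - fV (a - t)\<bar> * norm (kk t)"
    by (simp only: norm_mult norm_of_real)
  then show ?thesis using mult_right_mono[OF bd norm_ge_zero[of "kk t"]] by (simp add: mult.assoc)
qed

lemma W_bound: "norm (kk t * (1 - iexp (\<omega> * t))) \<le> (min 1 t * norm (kk t)) * (2 + \<bar>\<omega>\<bar>)"
proof (cases "t > 0")
  case False then show ?thesis using kk_zero[of t] by simp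
next
  case True
  have "norm (1 - iexp (\<omega> * t)) \<le> min 1 t * (2 + \<bar>\<omega>\<bar>)"
  proof (cases "t \<le> 1")
    case True
    have "norm (1 - iexp (\<omega> * t)) \<le> \<bar>\<omega>\<bar> * t" using norm_1_iexp(1)[of "\<omega> * t"] \<open>t > 0\<close> by (simp add: abs_mult)
    also have "\<dots> \<le> t * (2 + \<bar>\<omega>\<bar>)" using \<open>t > 0\<close> by (simp add: algebra_simps)
    finally show ?thesis using True by simp
  next
    case False
    then show ?thesis using norm_1_iexp(2)[of "\<omega> * t"] by simp
  qed
  note bd = this
  have "norm (kk t * (1 - iexp (\<omega> * t))) = norm (kk t) * norm (1 - iexp (\<omega> * t))"
    by (simp only: norm_mult)
  then show ?thesis using mult_left_mono[OF bd norm_ge_zero[of "kk t"]] by (simp add: mult_ac)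
qed

lemma fV_shift_int: "integrable lborel (\<lambda>z. fV (sa - z))"
proof -
  have "integrable lborel (\<lambda>x. fV (sa + (-1)*x))"
    by (intro lborel_integrable_real_affine fV_int) simp
  then show ?thesis by simp
qed

lemma fV_inner: "(\<integral>z. complex_of_real (fV (sa - z)) * iexp (-(\<omega>*z)) \<partial>lborel) = iexp (-(\<omega> * sa)) * \<phi> \<omega>"
proof -
  have "(\<integral>z. complex_of_real (fV (sa - z)) * iexp (-(\<omega>*z)) \<partial>lborel)
     = \<bar>-1\<bar> *\<^sub>R (\<integral>u. complex_of_real (fV (sa - (sa + (-1)*u))) * iexp (-(\<omega>*(sa + (-1)*u))) \<partial>lborel)"
    by (intro lborel_integral_real_affine) simp
  also have "(\<lambda>u. complex_of_real (fV (sa - (sa + (-1)*u))) * iexp (-(\<omega>*(sa + (-1)*u))))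
     = (\<lambda>u. iexp (-(\<omega> * sa)) * (fV u *\<^sub>R iexp (\<omega> * u)))"
  proof
    fix u
    have "iexp (-(\<omega> * sa)) * iexp (\<omega> * u) = iexp (-(\<omega> * sa) + \<omega> * u)" by (rule iexp_add')
    also have "-(\<omega> * sa) + \<omega> * u = -(\<omega>*(sa + (-1)*u))" by (simp add: algebra_simps)
    finally show "complex_of_real (fV (sa - (sa + (-1)*u))) * iexp (-(\<omega>*(sa + (-1)*u)))
       = iexp (-(\<omega> * sa)) * (fV u *\<^sub>R iexp (\<omega> * u))"
      by (simp add: scaleR_conv_of_real mult_ac)
  qed
  finally have X: "(\<integral>z. complex_of_real (fV (sa - z)) * iexp (-(\<omega>*z)) \<partial>lborel)
     = \<bar>-1\<bar> *\<^sub>R (\<integral>u. iexp (-(\<omega> * sa)) * (fV u *\<^sub>R iexp (\<omega> * u)) \<partial>lborel)" .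
  show ?thesis unfolding X integral_mult_right_zero phi_def by simp
qed

lemma fV_test:
  assumes P: "integrable lborel \<Psi>"
  shows "(\<integral>z. complex_of_real (fV (sa - z)) * (\<integral>\<omega>. iexp (-(\<omega>*z)) * \<Psi> \<omega> \<partial>lborel) \<partial>lborel)
       = (\<integral>\<omega>. \<Psi> \<omega> * (iexp (-(\<omega> * sa)) * \<phi> \<omega>) \<partial>lborel)"
  using fubini_test(1)[OF integrable_of_real[OF fV_shift_int[of sa]] P] unfolding fV_inner .

lemma phi_meas[measurable]: "\<phi> \<in> borel_measurable borel"
proof -
  have "\<phi> = (\<lambda>\<omega>. \<integral>x. fV x *\<^sub>R iexp (\<omega> * x) \<partial>lborel)" using phi_def by auto
  also have "\<dots> \<in> borel_measurable borel" by measurable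
  finally show ?thesis .
qed

lemma four_eq: "fourier lamf (-\<omega>) = (\<integral>z. lamf z * iexp (-(\<omega>*z)) \<partial>lborel)"
  unfolding fourier_def by (simp add: mult.commute)

lemma fVpsi_int:
  assumes "integrable lborel psi"
  shows "integrable lborel (\<lambda>z. complex_of_real (fV (a - z)) * psi z)"
proof (rule Bochner_Integration.integrable_bound)
  show "integrable lborel (\<lambda>z. B * norm (psi z))" using assms by auto
  show "(\<lambda>z. complex_of_real (fV (a - z)) * psi z) \<in> borel_measurable lborel" using assms by measurable
  show "AE x in lborel. norm (complex_of_real (fV (a - x)) * psi x) \<le> norm (B * norm (psi x))"
    using fV_B B_nn by (auto intro!: AE_I2 simp: norm_mult mult_right_mono)
qed

lemma core:
  fixes \<Psi> :: "real \<Rightarrow> complex"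
  assumes P: "integrable lborel \<Psi>"
    and P1: "integrable lborel (\<lambda>\<omega>. (2 + \<bar>\<omega>\<bar>) * norm (\<Psi> \<omega>))"
    and psi_int: "integrable lborel (\<lambda>z. \<integral>\<omega>. iexp (-(\<omega>*z)) * \<Psi> \<omega> \<partial>lborel)"
  shows "(\<integral>z. lamf z * (\<integral>\<omega>. iexp (-(\<omega>*z)) * \<Psi> \<omega> \<partial>lborel) \<partial>lborel)
       = (\<integral>z. (c * complex_of_real (fV (y - z)) + (\<integral>t. complex_of_real (fV (y - z) - fV (y - z - t)) * kk t \<partial>lborel))
               * (\<integral>\<omega>. iexp (-(\<omega>*z)) * \<Psi> \<omega> \<partial>lborel) \<partial>lborel)"
proof -
  define psi where "psi z = (\<integral>\<omega>. iexp (-(\<omega>*z)) * \<Psi> \<omega> \<partial>lborel)" for z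
  define W where "W \<omega> = \<Psi> \<omega> * (iexp (-(\<omega>*y)) * \<phi> \<omega>)" for \<omega>
  define I where "I \<omega> = (\<integral>t. (1 - iexp (\<omega>*t)) * kk t \<partial>lborel)" for \<omega>
  have psi_int': "integrable lborel psi" using psi_int by (simp add: psi_def[abs_def])
  have [measurable]: "psi \<in> borel_measurable borel" "\<Psi> \<in> borel_measurable borel" using psi_int' P by auto
  have [measurable]: "W \<in> borel_measurable borel" unfolding W_def[abs_def] by measurable
  have Wb: "norm (W \<omega>) \<le> norm (\<Psi> \<omega>)" for \<omega>
    using phi_bd[of \<omega>] by (simp add: W_def norm_mult mult_left_le)
  have W_int: "integrable lborel W"
    by (rule Bochner_Integration.integrable_bound[OF integrable_norm[OF P]]) (auto intro!: AE_I2 Wb)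
  define F where "F = (\<lambda>(z,t). psi z * (complex_of_real (fV (y - z) - fV (y - z - t)) * kk t))"
  have F_int: "integrable (lborel \<Otimes>\<^sub>M lborel) F"
  proof (rule lborel_pair.integrable_prod_bound[where a="\<lambda>z. norm (psi z)" and b="\<lambda>t. (2*B + L) * (min 1 t * norm (kk t))"])
    show "F \<in> borel_measurable (lborel \<Otimes>\<^sub>M lborel)" unfolding F_def by measurable
    show "integrable lborel (\<lambda>z. norm (psi z))" using psi_int' by auto
    show "integrable lborel (\<lambda>t. (2*B + L) * (min 1 t * norm (kk t)))" using m_int by auto
    show "norm (F (x, t)) \<le> norm (psi x) * ((2*B + L) * (min 1 t * norm (kk t)))" for x t
      unfolding F_def using D_bound[of "y - x" t]
      by (simp add: norm_mult mult_left_mono del: of_real_diff)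
  qed
  have step2: "(\<integral>z. F (z,t) \<partial>lborel) = kk t * (\<integral>\<omega>. W \<omega> * (1 - iexp (\<omega>*t)) \<partial>lborel)" for t
  proof -
    have "(\<integral>z. F (z,t) \<partial>lborel)
        = (\<integral>z. kk t * (complex_of_real (fV (y - z)) * psi z - complex_of_real (fV ((y - t) - z)) * psi z) \<partial>lborel)"
      unfolding F_def by (rule Bochner_Integration.integral_cong) (auto simp: algebra_simps)
    also have "\<dots> = kk t * ((\<integral>z. complex_of_real (fV (y - z)) * psi z \<partial>lborel) - (\<integral>z. complex_of_real (fV ((y - t) - z)) * psi z \<partial>lborel))"
      by (simp add: Bochner_Integration.integral_diff fVpsi_int[OF psi_int'])
    also have "\<dots> = kk t * ((\<integral>\<omega>. \<Psi> \<omega> * (iexp (-(\<omega> * y)) * \<phi> \<omega>) \<partial>lborel) - (\<integral>\<omega>. \<Psi> \<omega> * (iexp (-(\<omega> * (y - t))) * \<phi> \<omega>) \<partial>lborel))"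
      unfolding psi_def using fV_test[OF P, of y] fV_test[OF P, of "y - t"] by simp
    also have "\<dots> = kk t * (\<integral>\<omega>. \<Psi> \<omega> * (iexp (-(\<omega> * y)) * \<phi> \<omega>) - \<Psi> \<omega> * (iexp (-(\<omega> * (y - t))) * \<phi> \<omega>) \<partial>lborel)"
    proof -
      have i2: "integrable lborel (\<lambda>\<omega>. \<Psi> \<omega> * (iexp (-(\<omega> * a)) * \<phi> \<omega>))" for a
        by (rule Bochner_Integration.integrable_bound[OF integrable_norm[OF P]])
           (use phi_bd in \<open>auto intro!: AE_I2 simp: norm_mult mult_left_le\<close>)
      show ?thesis by (simp only: Bochner_Integration.integral_diff[OF i2 i2])
    qed
    also have "(\<lambda>\<omega>. \<Psi> \<omega> * (iexp (-(\<omega> * y)) * \<phi> \<omega>) - \<Psi> \<omega> * (iexp (-(\<omega> * (y - t))) * \<phi> \<omega>))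
        = (\<lambda>\<omega>. W \<omega> * (1 - iexp (\<omega>*t)))"
    proof
      fix \<omega>
      have "iexp (-(\<omega> * y)) * iexp (\<omega>*t) = iexp (-(\<omega> * y) + \<omega>*t)" by (rule iexp_add')
      also have "-(\<omega> * y) + \<omega>*t = -(\<omega> * (y - t))" by (simp add: algebra_simps)
      finally have e: "iexp (-(\<omega> * (y - t))) = iexp (-(\<omega> * y)) * iexp (\<omega>*t)" by simp
      show "\<Psi> \<omega> * (iexp (-(\<omega> * y)) * \<phi> \<omega>) - \<Psi> \<omega> * (iexp (-(\<omega> * (y - t))) * \<phi> \<omega>) = W \<omega> * (1 - iexp (\<omega>*t))"
        unfolding e W_def by (simp add: algebra_simps)
    qed
    finally show ?thesis .
  qed
  define G where "G = (\<lambda>(t,\<omega>). kk t * (W \<omega> * (1 - iexp (\<omega>*t))))"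
  have G_int: "integrable (lborel \<Otimes>\<^sub>M lborel) G"
  proof (rule lborel_pair.integrable_prod_bound[where a="\<lambda>t. min 1 t * norm (kk t)" and b="\<lambda>\<omega>. (2 + \<bar>\<omega>\<bar>) * norm (\<Psi> \<omega>)"])
    show "G \<in> borel_measurable (lborel \<Otimes>\<^sub>M lborel)" unfolding G_def by measurable
    show "integrable lborel (\<lambda>t. min 1 t * norm (kk t))" by (rule m_int)
    show "integrable lborel (\<lambda>\<omega>. (2 + \<bar>\<omega>\<bar>) * norm (\<Psi> \<omega>))" by (rule P1)
    show "norm (G (t, \<omega>)) \<le> min 1 t * norm (kk t) * ((2 + \<bar>\<omega>\<bar>) * norm (\<Psi> \<omega>))" for t \<omega>
    proof -
      have "norm (G (t, \<omega>)) = norm (kk t * (1 - iexp (\<omega>*t))) * norm (W \<omega>)"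
        unfolding G_def by (simp add: norm_mult)
      also have "\<dots> \<le> ((min 1 t * norm (kk t)) * (2 + \<bar>\<omega>\<bar>)) * norm (\<Psi> \<omega>)"
        by (intro mult_mono W_bound Wb) (auto intro: order_trans[OF norm_ge_zero W_bound])
      finally show ?thesis by (simp add: mult_ac)
    qed
  qed
  have G_snd: "(\<integral>t. G (t,\<omega>) \<partial>lborel) = W \<omega> * I \<omega>" for \<omega>
  proof -
    have "(\<lambda>t. G (t,\<omega>)) = (\<lambda>t. W \<omega> * ((1 - iexp (\<omega>*t)) * kk t))" by (auto simp: G_def)
    then show ?thesis by (simp only: I_def integral_mult_right_zero)
  qed
  have WI_int: "integrable lborel (\<lambda>\<omega>. W \<omega> * I \<omega>)"
    using lborel_pair.integrable_snd[of "\<lambda>t \<omega>. G (t,\<omega>)"] G_int G_snd by simp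
  have FG: "(\<integral>z. (\<integral>t. F (z,t) \<partial>lborel) \<partial>lborel) = (\<integral>\<omega>. W \<omega> * I \<omega> \<partial>lborel)"
  proof -
    have "(\<integral>z. (\<integral>t. F (z,t) \<partial>lborel) \<partial>lborel) = (\<integral>t. (\<integral>z. F (z,t) \<partial>lborel) \<partial>lborel)"
      using lborel_pair.Fubini_integral[of "\<lambda>z t. F (z,t)"] F_int by simp
    also have "\<dots> = (\<integral>t. (\<integral>\<omega>. G (t,\<omega>) \<partial>lborel) \<partial>lborel)"
      unfolding step2 G_def by (simp add: integral_mult_right_zero)
    also have "\<dots> = (\<integral>\<omega>. (\<integral>t. G (t,\<omega>) \<partial>lborel) \<partial>lborel)"
      using lborel_pair.Fubini_integral[of "\<lambda>t \<omega>. G (t,\<omega>)"] G_int by simp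
    finally show ?thesis unfolding G_snd .
  qed
  have Fi_int: "integrable lborel (\<lambda>z. \<integral>t. F (z,t) \<partial>lborel)"
    using lborel_pair.integrable_fst[of "\<lambda>z t. F (z,t)"] F_int by simp
  have rho_eq: "(c * complex_of_real (fV (y - z)) + (\<integral>t. complex_of_real (fV (y - z) - fV (y - z - t)) * kk t \<partial>lborel)) * psi z
      = c * (complex_of_real (fV (y - z)) * psi z) + (\<integral>t. F (z,t) \<partial>lborel)" for z
  proof -
    have e: "(\<integral>t. F (z,t) \<partial>lborel) = psi z * (\<integral>t. complex_of_real (fV (y - z) - fV (y - z - t)) * kk t \<partial>lborel)"
      unfolding F_def by (simp only: case_prod_conv integral_mult_right_zero)
    have alg: "\<And>(a::complex) b d p. (a*b + d)*p = a*(b*p) + p*d" by (simp add: algebra_simps)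
    show ?thesis unfolding e by (rule alg)
  qed
  have "(\<integral>z. (c * complex_of_real (fV (y - z)) + (\<integral>t. complex_of_real (fV (y - z) - fV (y - z - t)) * kk t \<partial>lborel)) * psi z \<partial>lborel)
      = c * (\<integral>z. complex_of_real (fV (y - z)) * psi z \<partial>lborel) + (\<integral>z. (\<integral>t. F (z,t) \<partial>lborel) \<partial>lborel)"
    unfolding rho_eq using fVpsi_int[OF psi_int', of y] Fi_int by (simp add: Bochner_Integration.integral_add)
  also have "\<dots> = c * (\<integral>\<omega>. W \<omega> \<partial>lborel) + (\<integral>\<omega>. W \<omega> * I \<omega> \<partial>lborel)"
    unfolding FG using fV_test[OF P, of y] by (simp add: psi_def W_def)
  also have "\<dots> = (\<integral>\<omega>. W \<omega> * (c + I \<omega>) \<partial>lborel)"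
    using W_int WI_int by (simp add: Bochner_Integration.integral_add algebra_simps)
  also have "\<dots> = (\<integral>\<omega>. \<Psi> \<omega> * (\<integral>z. lamf z * iexp (-(\<omega>*z)) \<partial>lborel) \<partial>lborel)"
  proof (rule integral_cong_AE)
    show "(\<lambda>\<omega>. W \<omega> * (c + I \<omega>)) \<in> borel_measurable lborel"
      using W_int WI_int by (simp add: algebra_simps)
    show "(\<lambda>\<omega>. \<Psi> \<omega> * (\<integral>z. lamf z * iexp (-(\<omega>*z)) \<partial>lborel)) \<in> borel_measurable lborel"
      using fubini_test(2)[OF lam_int P] by auto
    show "AE \<omega> in lborel. W \<omega> * (c + I \<omega>) = \<Psi> \<omega> * (\<integral>z. lamf z * iexp (-(\<omega>*z)) \<partial>lborel)"
      using hypA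
    proof eventually_elim
      case (elim \<omega>)
      show ?case unfolding four_eq[symmetric] elim W_def I_def by (simp only: mult_ac)
    qed
  qed
  also have "\<dots> = (\<integral>z. lamf z * psi z \<partial>lborel)"
    using fubini_test(1)[OF lam_int P] by (simp add: psi_def)
  finally show ?thesis by (simp add: psi_def)
qed

lemma fV_isCont: "isCont fV x"
  using fV_cont continuous_on_eq_continuous_at[of UNIV fV] by auto

lemma Dk_int: "integrable lborel (\<lambda>t. complex_of_real (fV a - fV (a - t)) * kk t)"
  by (rule Bochner_Integration.integrable_bound[where f="\<lambda>t. (2*B + L) * (min 1 t * norm (kk t))"])
     (use m_int in \<open>auto intro!: AE_I2 order_trans[OF D_bound] simp del: of_real_diff\<close>)

lemma rho_meas: "(\<lambda>z. c * complex_of_real (fV (y - z)) + (\<integral>t. complex_of_real (fV (y - z) - fV (y - z - t)) * kk t \<partial>lborel))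
   \<in> borel_measurable borel"
  by measurable

lemma rho_bound: "norm (c * complex_of_real (fV (y - z)) + (\<integral>t. complex_of_real (fV (y - z) - fV (y - z - t)) * kk t \<partial>lborel))
   \<le> norm c * B + (\<integral>t. (2*B + L) * (min 1 t * norm (kk t)) \<partial>lborel)"
proof -
  have "norm (\<integral>t. complex_of_real (fV (y - z) - fV (y - z - t)) * kk t \<partial>lborel)
      \<le> (\<integral>t. norm (complex_of_real (fV (y - z) - fV (y - z - t)) * kk t) \<partial>lborel)"
    by (rule integral_norm_bound)
  also have "\<dots> \<le> (\<integral>t. (2*B + L) * (min 1 t * norm (kk t)) \<partial>lborel)"
    by (intro integral_mono integrable_norm Dk_int D_bound) (use m_int in auto)
  finally have 1: "norm (\<integral>t. complex_of_real (fV (y - z) - fV (y - z - t)) * kk t \<partial>lborel)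
      \<le> (\<integral>t. (2*B + L) * (min 1 t * norm (kk t)) \<partial>lborel)" .
  have 2: "norm (c * complex_of_real (fV (y - z))) \<le> norm c * B"
    using fV_B[of "y - z"] by (simp add: norm_mult mult_left_mono)
  show ?thesis using norm_triangle_le[OF add_mono[OF 2 1]] by simp
qed

lemma rho_cont: "isCont (\<lambda>z. c * complex_of_real (fV (y - z)) + (\<integral>t. complex_of_real (fV (y - z) - fV (y - z - t)) * kk t \<partial>lborel)) z0"
proof (rule continuous_at_sequentiallyI)
  fix u assume u: "u \<longlonglongrightarrow> z0"
  have fc: "(\<lambda>n. fV (a - u n)) \<longlonglongrightarrow> fV (a - z0)" for a
    by (rule isCont_tendsto_compose[OF fV_isCont]) (intro tendsto_intros u)
  have 1: "(\<lambda>n. c * complex_of_real (fV (y - u n))) \<longlonglongrightarrow> c * complex_of_real (fV (y - z0))"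
    by (intro tendsto_intros fc)
  have 2: "(\<lambda>n. \<integral>t. complex_of_real (fV (y - u n) - fV (y - u n - t)) * kk t \<partial>lborel)
       \<longlonglongrightarrow> (\<integral>t. complex_of_real (fV (y - z0) - fV (y - z0 - t)) * kk t \<partial>lborel)"
  proof (rule integral_dominated_convergence[where w="\<lambda>t. (2*B + L) * (min 1 t * norm (kk t))"])
    show "integrable lborel (\<lambda>t. (2*B + L) * (min 1 t * norm (kk t)))" using m_int by auto
    show "AE t in lborel. (\<lambda>n. complex_of_real (fV (y - u n) - fV (y - u n - t)) * kk t)
       \<longlonglongrightarrow> complex_of_real (fV (y - z0) - fV (y - z0 - t)) * kk t"
    proof (intro AE_I2 tendsto_intros)
      fix t
      show "(\<lambda>n. fV (y - u n)) \<longlonglongrightarrow> fV (y - z0)" by (rule fc)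
      show "(\<lambda>n. fV (y - u n - t)) \<longlonglongrightarrow> fV (y - z0 - t)" using fc[of "y - t"] by (simp add: algebra_simps)
    qed
    show "AE t in lborel. norm (complex_of_real (fV (y - u n) - fV (y - u n - t)) * kk t) \<le> (2*B + L) * (min 1 t * norm (kk t))" for n
      using D_bound by (intro AE_I2) auto
  qed auto
  show "(\<lambda>n. c * complex_of_real (fV (y - u n)) + (\<integral>t. complex_of_real (fV (y - u n) - fV (y - u n - t)) * kk t \<partial>lborel))
     \<longlonglongrightarrow> c * complex_of_real (fV (y - z0)) + (\<integral>t. complex_of_real (fV (y - z0) - fV (y - z0 - t)) * kk t \<partial>lborel)"
    by (rule tendsto_add[OF 1 2])
qed

lemma lam_eq_rho:
  "lamf z0 = c * complex_of_real (fV (y - z0)) + (\<integral>t. complex_of_real (fV (y - z0) - fV (y - z0 - t)) * kk t \<partial>lborel)"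
proof -
  define rho where "rho z = c * complex_of_real (fV (y - z)) + (\<integral>t. complex_of_real (fV (y - z) - fV (y - z - t)) * kk t \<partial>lborel)" for z
  have eq: "(\<integral>z. lamf z * complex_of_real (real (Suc n) * std_normal_density (real (Suc n)*(z - z0))) \<partial>lborel)
      = (\<integral>z. rho z * complex_of_real (real (Suc n) * std_normal_density (real (Suc n)*(z - z0))) \<partial>lborel)" for n
  proof -
    define r where "r = real (Suc n)"
    have r: "r > 0" by (simp add: r_def)
    define \<Psi> where "\<Psi> \<omega> = complex_of_real (std_normal_density (\<omega>/r) / sqrt (2*pi)) * iexp (\<omega>*z0)" for \<omega>
    have psi: "(\<integral>\<omega>. iexp (-(\<omega>*z)) * \<Psi> \<omega> \<partial>lborel) = complex_of_real (r * std_normal_density (r*(z - z0)))" for z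
      unfolding \<Psi>_def by (rule gauss_fourier[OF r])
    have nP: "norm (\<Psi> \<omega>) = std_normal_density (\<omega>/r) / sqrt (2*pi)" for \<omega>
      unfolding \<Psi>_def norm_mult norm_of_real by (simp add: abs_of_nonneg)
    have Pm: "\<Psi> \<in> borel_measurable borel" unfolding \<Psi>_def[abs_def] normal_density_def by measurable
    have P: "integrable lborel \<Psi>"
      by (rule Bochner_Integration.integrable_bound[where f="\<lambda>\<omega>. std_normal_density (\<omega>/r) / sqrt (2*pi)"])
         (use gauss_integrable_scaled(1)[OF r] nP Pm in \<open>auto intro!: AE_I2\<close>)
    have P1: "integrable lborel (\<lambda>\<omega>. (2 + \<bar>\<omega>\<bar>) * norm (\<Psi> \<omega>))"
    proof -
      have "integrable lborel (\<lambda>\<omega>. (2 / sqrt (2*pi)) * std_normal_density (\<omega>/r) + (1 / sqrt (2*pi)) * (\<bar>\<omega>\<bar> * std_normal_density (\<omega>/r)))"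
        using gauss_integrable_scaled[OF r] by auto
      moreover have "(\<lambda>\<omega>. (2 + \<bar>\<omega>\<bar>) * (std_normal_density (\<omega>/r) / sqrt (2*pi)))
         = (\<lambda>\<omega>. (2 / sqrt (2*pi)) * std_normal_density (\<omega>/r) + (1 / sqrt (2*pi)) * (\<bar>\<omega>\<bar> * std_normal_density (\<omega>/r)))"
        by (rule ext) (simp add: field_simps)
      ultimately show ?thesis unfolding nP by simp
    qed
    have psi_int: "integrable lborel (\<lambda>z. \<integral>\<omega>. iexp (-(\<omega>*z)) * \<Psi> \<omega> \<partial>lborel)"
      unfolding psi using gauss_integrable_shift[OF r, of z0] by auto
    show ?thesis using core[OF P P1 psi_int] unfolding psi rho_def r_def .
  qed
  have l1: "(\<lambda>n. \<integral>z. lamf z * complex_of_real (real (Suc n) * std_normal_density (real (Suc n)*(z - z0))) \<partial>lborel) \<longlonglongrightarrow> lamf z0"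
    by (rule approx_id[OF lam_meas lam_B]) (use lam_cont continuous_on_eq_continuous_at[of UNIV lamf] in auto)
  have l2: "(\<lambda>n. \<integral>z. rho z * complex_of_real (real (Suc n) * std_normal_density (real (Suc n)*(z - z0))) \<partial>lborel) \<longlonglongrightarrow> rho z0"
  proof -
    have rb: "\<And>z. norm (rho z) \<le> norm c * B + (\<integral>t. (2*B + L) * (min 1 t * norm (kk t)) \<partial>lborel)"
      unfolding rho_def by (rule rho_bound)
    have rm: "rho \<in> borel_measurable borel" unfolding rho_def[abs_def] by (rule rho_meas)
    have rc: "isCont rho z0" unfolding rho_def[abs_def] by (rule rho_cont)
    show ?thesis by (rule approx_id[OF rm rb rc])
  qed
  show ?thesis using LIMSEQ_unique[OF l1 l2[folded eq]] by (simp add: rho_def)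
qed

lemma lam_measure:
  fixes \<mu> :: "real measure"
  assumes sets_mu: "sets \<mu> = sets borel" and fin: "finite_measure \<mu>"
  shows "(\<integral>x. lamf x \<partial>\<mu>) = c * complex_of_real (\<integral>z. fV (y - z) \<partial>\<mu>)
     + (\<integral>t. complex_of_real ((\<integral>z. fV (y - z) \<partial>\<mu>) - (\<integral>z. fV ((y - t) - z) \<partial>\<mu>)) * kk t \<partial>lborel)"
    and "integrable lborel (\<lambda>t. complex_of_real ((\<integral>z. fV (y - z) \<partial>\<mu>) - (\<integral>z. fV ((y - t) - z) \<partial>\<mu>)) * kk t)"
proof -
  interpret mu: finite_measure \<mu> by (rule fin)
  have ps: "pair_sigma_finite \<mu> lborel"
    by (simp add: pair_sigma_finite_def sigma_finite_lborel mu.sigma_finite_measure_axioms)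
  interpret PM: pair_sigma_finite \<mu> lborel by (rule ps)
  have mcong: "measurable \<mu> N = measurable borel N" for N :: "'b measure"
    using sets_mu by (intro measurable_cong_sets) auto
  have mcong2: "measurable (\<mu> \<Otimes>\<^sub>M lborel) N = measurable (borel \<Otimes>\<^sub>M lborel) N" for N :: "'b measure"
    using sets_mu by (intro measurable_cong_sets sets_pair_measure_cong) auto
  have fint: "integrable \<mu> (\<lambda>z. fV (a - z))" for a
    by (rule mu.integrable_const_bound[where B=B]) (use fV_B in \<open>auto simp: mcong\<close>)
  define H where "H = (\<lambda>(z,t). complex_of_real (fV (y - z) - fV (y - z - t)) * kk t)"
  have H_int: "integrable (\<mu> \<Otimes>\<^sub>M lborel) H"
  proof (rule PM.integrable_prod_bound[where a="\<lambda>z. 1" and b="\<lambda>t. (2*B + L) * (min 1 t * norm (kk t))"])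
    show "H \<in> borel_measurable (\<mu> \<Otimes>\<^sub>M lborel)" unfolding mcong2 H_def by measurable
    show "integrable \<mu> (\<lambda>z. 1::real)" by simp
    show "integrable lborel (\<lambda>t. (2*B + L) * (min 1 t * norm (kk t)))" using m_int by auto
    show "norm (H (x, t)) \<le> 1 * ((2*B + L) * (min 1 t * norm (kk t)))" for x t
      unfolding H_def using D_bound[of "y - x" t] by (simp del: of_real_diff)
  qed
  have rho_int: "integrable \<mu> (\<lambda>z. \<integral>t. H (z,t) \<partial>lborel)"
    using PM.integrable_fst[of "\<lambda>z t. H (z,t)"] H_int by simp
  have c_int: "integrable \<mu> (\<lambda>z. c * complex_of_real (fV (y - z)))"
    using fint[of y] by auto
  have eqH: "(\<integral>z. H (z,t) \<partial>\<mu>) = complex_of_real ((\<integral>z. fV (y - z) \<partial>\<mu>) - (\<integral>z. fV ((y - t) - z) \<partial>\<mu>)) * kk t" for t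
  proof -
    have "(\<integral>z. H (z,t) \<partial>\<mu>) = (\<integral>z. complex_of_real (fV (y - z) - fV ((y - t) - z)) \<partial>\<mu>) * kk t"
      unfolding H_def by (simp add: algebra_simps del: of_real_diff)
    also have "\<dots> = complex_of_real ((\<integral>z. fV (y - z) \<partial>\<mu>) - (\<integral>z. fV ((y - t) - z) \<partial>\<mu>)) * kk t"
      using fint[of y] fint[of "y - t"] by (simp only: integral_complex_of_real Bochner_Integration.integral_diff)
    finally show ?thesis .
  qed
  show "integrable lborel (\<lambda>t. complex_of_real ((\<integral>z. fV (y - z) \<partial>\<mu>) - (\<integral>z. fV ((y - t) - z) \<partial>\<mu>)) * kk t)"
    using PM.integrable_snd[of "\<lambda>z t. H (z,t)"] H_int unfolding eqH by simp
  have "(\<integral>x. lamf x \<partial>\<mu>) = (\<integral>z. c * complex_of_real (fV (y - z)) + (\<integral>t. H (z,t) \<partial>lborel) \<partial>\<mu>)"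
    unfolding H_def by (rule Bochner_Integration.integral_cong[OF refl]) (simp add: lam_eq_rho del: of_real_diff)
  also have "\<dots> = c * complex_of_real (\<integral>z. fV (y - z) \<partial>\<mu>) + (\<integral>z. (\<integral>t. H (z,t) \<partial>lborel) \<partial>\<mu>)"
    using c_int rho_int by (simp add: Bochner_Integration.integral_add)
  also have "(\<integral>z. (\<integral>t. H (z,t) \<partial>lborel) \<partial>\<mu>) = (\<integral>t. (\<integral>z. H (z,t) \<partial>\<mu>) \<partial>lborel)"
    using PM.Fubini_integral[of "\<lambda>z t. H (z,t)"] H_int by simp
  also have "\<dots> = (\<integral>t. complex_of_real ((\<integral>z. fV (y - z) \<partial>\<mu>) - (\<integral>z. fV ((y - t) - z) \<partial>\<mu>)) * kk t \<partial>lborel)"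
    unfolding eqH ..
  finally show "(\<integral>x. lamf x \<partial>\<mu>) = c * complex_of_real (\<integral>z. fV (y - z) \<partial>\<mu>)
     + (\<integral>t. complex_of_real ((\<integral>z. fV (y - z) \<partial>\<mu>) - (\<integral>z. fV ((y - t) - z) \<partial>\<mu>)) * kk t \<partial>lborel)" .
qed

end


lemma lipschitz_deriv:
  fixes f f' :: "real \<Rightarrow> real"
  assumes der: "\<And>x. (f has_real_derivative f' x) (at x)" and bd: "\<And>x. \<bar>f' x\<bar> \<le> L"
  shows "\<bar>f a - f b\<bar> \<le> L * \<bar>a - b\<bar>"
proof -
  have *: "\<bar>f q - f p\<bar> \<le> L * (q - p)" if pq: "p < q" for p q
  proof -
    obtain z where "f q - f p = (q - p) * f' z" using MVT2[OF pq, of f f'] der by blast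
    then have "\<bar>f q - f p\<bar> = (q - p) * \<bar>f' z\<bar>" using pq by (simp add: abs_mult)
    also have "\<dots> \<le> (q - p) * L" using pq bd[of z] by (intro mult_left_mono) auto
    finally show ?thesis by (simp add: mult.commute)
  qed
  show ?thesis
  proof (cases a b rule: linorder_cases)
    case less then show ?thesis using *[OF less] by (simp add: abs_minus_commute)
  next
    case equal then show ?thesis by simp
  next
    case greater then show ?thesis using *[OF greater] by simp
  qed
qed

lemma AE_reflect:
  assumes "AE x in lborel. P (x::real)"
  shows "AE x in lborel. P (- x)"
proof -
  from assms obtain N where N: "{x \<in> space lborel. \<not> P x} \<subseteq> N" "emeasure lborel N = 0" "N \<in> sets lborel"
    by (rule AE_E)
  have Nb: "N \<in> sets borel" using N(3) by simp
  have "emeasure lborel (uminus -` N \<inter> space lborel) = emeasure (distr lborel borel uminus) N"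
    using Nb by (subst emeasure_distr) auto
  also have "\<dots> = 0" using N(2) by (simp add: lborel_distr_uminus)
  moreover have "(\<lambda>x::real. - x) -` N \<inter> space borel \<in> sets borel"
    by (rule measurable_sets[OF _ Nb]) (intro borel_measurable_continuous_onI continuous_intros)
  ultimately have "uminus -` N \<inter> space lborel \<in> null_sets lborel"
    by (auto intro!: null_setsI)
  then show ?thesis
    by (rule AE_I') (use N(1) in auto)
qed

theorem proposition9:
  fixes M :: "'s measure" and X V :: "'s \<Rightarrow> real"
    and y :: real and g fV :: "real \<Rightarrow> real"
    and c :: complex and k :: "real \<Rightarrow> complex"
  assumes "prob_space M"
    and "g \<in> borel_measurable borel"
    and "random_variable_indep": "prob_space.indep_var M borel X borel V"
    and "X \<in> borel_measurable M" and "V \<in> borel_measurable M"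
    and "\<forall>x. fV x \<ge> 0"
    and "distributed M lborel V (\<lambda>x. ennreal (fV x))"
    and "C0_1 fV"
    and "AE \<omega> in lborel. char (distr M borel V) \<omega> \<noteq> 0"
    and "Xi0 (lam g fV y)"
    and "integrable lborel (fourier (lam g fV y))"
    and "set_borel_measurable lborel {0<..} k"
    and "(\<integral>\<^sup>+ t. ennreal (indicator {0<..1} t * (t * cmod (k t))) \<partial>lborel) < \<infinity>"
    and "(\<integral>\<^sup>+ t. ennreal (indicator {1..} t * cmod (k t)) \<partial>lborel) < \<infinity>"
    and "AE \<omega> in lborel. Qfun g fV (distr M borel V) y \<omega> =
           iexp (\<omega> * y) * (c + (LINT t:{0<..}|lborel. (1 - iexp (- (\<omega> * t))) * k t))"
  shows "(\<forall>\<mu>1 \<mu>2 :: real measure.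
            sets \<mu>1 = sets borel \<longrightarrow> sets \<mu>2 = sets borel \<longrightarrow>
            finite_measure \<mu>1 \<longrightarrow> finite_measure \<mu>2 \<longrightarrow>
            T_functional g fV y \<mu>1 \<mu>2 =
              c * complex_of_real (conv_signed fV \<mu>1 \<mu>2 y)
              + (LINT t:{0<..}|lborel.
                   complex_of_real (conv_signed fV \<mu>1 \<mu>2 y - conv_signed fV \<mu>1 \<mu>2 (y - t)) * k t))
       \<and> (fY fV (distr M borel X) y > 0 \<longrightarrow>
            complex_of_real (cond_exp_at g fV (distr M borel X) y) =
              complex_of_real (1 / fY fV (distr M borel X) y) *
                (c * complex_of_real (fY fV (distr M borel X) y)
                 + (LINT t:{0<..}|lborel.
                      complex_of_real (fY fV (distr M borel X) y - fY fV (distr M borel X) (y - t)) * k t)))"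
proof -
  interpret prob_space M by (rule assms(1))
  define PV where "PV = distr M borel V"
  have PV_eq: "PV = density lborel (\<lambda>x. ennreal (fV x))"
  proof -
    have "PV = distr M lborel V" unfolding PV_def by (rule distr_cong) auto
    then show ?thesis using distributed_distr_eq_density[OF assms(7)] by simp
  qed
  obtain fV' where der: "\<And>x. (fV has_real_derivative fV' x) (at x)" and c': "continuous_on UNIV fV'"
    and l0: "(fV \<longlongrightarrow> 0) at_infinity" and l1: "(fV' \<longlongrightarrow> 0) at_infinity"
    using assms(8) unfolding C0_1_def by blast
  have fV_cont: "continuous_on UNIV fV"
    by (intro continuous_at_imp_continuous_on ballI DERIV_isCont[OF der])
  obtain B where fV_B: "\<And>x. \<bar>fV x\<bar> \<le> B" using bounded_vanishing[OF fV_cont l0] by auto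
  obtain L where fV'_B: "\<And>x. \<bar>fV' x\<bar> \<le> L" using bounded_vanishing[OF c' l1] by auto
  have fV_L: "\<And>a b. \<bar>fV a - fV b\<bar> \<le> L * \<bar>a - b\<bar>" by (rule lipschitz_deriv[OF der fV'_B])
  have fV_meas: "fV \<in> borel_measurable borel" using fV_cont by (rule borel_measurable_continuous_onI)
  have PVprob: "prob_space PV" unfolding PV_def by (rule prob_space_distr) (simp add: assms(5))
  have fV_int: "integrable lborel fV"
  proof -
    have "integrable PV (\<lambda>_. 1::real)" using PVprob by (simp add: finite_measure.integrable_const prob_space.finite_measure)
    then have "integrable lborel (\<lambda>x. fV x *\<^sub>R (1::real))"
      unfolding PV_eq using fV_meas assms(6) by (subst (asm) integrable_density) auto
    then show ?thesis by simp
  qed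
  have phi_def: "\<And>\<omega>. char PV \<omega> = (\<integral>x. fV x *\<^sub>R iexp (\<omega> * x) \<partial>lborel)"
    unfolding char_def PV_eq using fV_meas assms(6) by (subst integral_density) auto
  have phi_bd: "\<And>\<omega>. norm (char PV \<omega>) \<le> 1"
    using real_distribution.cmod_char_le_1 real_distribution_distr[of V] assms(5) unfolding PV_def by auto
  define kk where "kk t = indicator {0<..} t *\<^sub>R k t" for t
  have kk_meas: "kk \<in> borel_measurable borel"
    using assms(12) unfolding set_borel_measurable_def kk_def[abs_def] by simp
  have kk_zero: "\<And>t. t \<le> 0 \<Longrightarrow> kk t = 0" by (simp add: kk_def)
  have m_int: "integrable lborel (\<lambda>t. min 1 t * norm (kk t))"
  proof -
    have [measurable]: "kk \<in> borel_measurable borel" by (rule kk_meas)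
    have i1: "integrable lborel (\<lambda>t. indicator {0<..1} t * (t * norm (kk t)))"
    proof (rule integrableI_nonneg)
      show "(\<lambda>t. indicator {0<..1} t * (t * norm (kk t))) \<in> borel_measurable lborel" by measurable
      show "AE x in lborel. 0 \<le> indicator {0<..1} x * (x * norm (kk x))"
        by (intro AE_I2) (auto simp: indicator_def)
      have "(\<integral>\<^sup>+ t. ennreal (indicator {0<..1} t * (t * norm (kk t))) \<partial>lborel)
          = (\<integral>\<^sup>+ t. ennreal (indicator {0<..1} t * (t * cmod (k t))) \<partial>lborel)"
        by (intro nn_integral_cong) (auto simp: kk_def indicator_def)
      then show "(\<integral>\<^sup>+ t. ennreal (indicator {0<..1} t * (t * norm (kk t))) \<partial>lborel) < \<infinity>"
        using assms(13) by simp
    qed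
    have i2: "integrable lborel (\<lambda>t. indicator {1..} t * norm (kk t))"
    proof (rule integrableI_nonneg)
      show "(\<lambda>t. indicator {1..} t * norm (kk t)) \<in> borel_measurable lborel" by measurable
      show "AE x in lborel. 0 \<le> indicator {1..} x * norm (kk x)"
        by (intro AE_I2) (auto simp: indicator_def)
      have "(\<integral>\<^sup>+ t. ennreal (indicator {1..} t * norm (kk t)) \<partial>lborel)
          = (\<integral>\<^sup>+ t. ennreal (indicator {1..} t * cmod (k t)) \<partial>lborel)"
        by (intro nn_integral_cong) (auto simp: kk_def indicator_def)
      then show "(\<integral>\<^sup>+ t. ennreal (indicator {1..} t * norm (kk t)) \<partial>lborel) < \<infinity>"
        using assms(14) by simp
    qed
    show ?thesis
    proof (rule Bochner_Integration.integrable_bound[OF Bochner_Integration.integrable_add[OF i1 i2]])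
      show "(\<lambda>t. min 1 t * norm (kk t)) \<in> borel_measurable lborel" by measurable
      show "AE x in lborel. norm (min 1 x * norm (kk x)) \<le> norm (indicator {0<..1} x * (x * norm (kk x)) + indicator {1..} x * norm (kk x))"
        by (intro AE_I2) (auto simp: kk_def indicator_def)
    qed
  qed
  define lamf where "lamf = lam g fV y"
  have lam_cont: "continuous_on UNIV lamf" and lam_lim: "(lamf \<longlongrightarrow> 0) at_infinity"
    and lam_int: "integrable lborel lamf"
    using assms(10) unfolding Xi0_def lamf_def by auto
  obtain Bl where lam_B: "\<And>x. norm (lamf x) \<le> Bl" using bounded_vanishing[OF lam_cont lam_lim] by auto
  have hypA: "AE \<omega> in lborel. fourier lamf (-\<omega>) =
       iexp (-(\<omega>*y)) * char PV \<omega> * (c + (\<integral>t. (1 - iexp (\<omega>*t)) * kk t \<partial>lborel))"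
    using assms(9) AE_reflect[OF assms(15)]
  proof eventually_elim
    case (elim \<omega>)
    have "Qfun g fV PV y (-\<omega>) = fourier lamf (-\<omega>) / char PV \<omega>"
      using elim(1) by (simp add: Qfun_def lamf_def PV_def)
    moreover have "(LINT t:{0<..}|lborel. (1 - iexp (- (- \<omega> * t))) * k t) = (\<integral>t. (1 - iexp (\<omega>*t)) * kk t \<partial>lborel)"
      unfolding set_lebesgue_integral_def kk_def by (rule Bochner_Integration.integral_cong) (auto simp: indicator_def)
    ultimately have "fourier lamf (-\<omega>) / char PV \<omega> = iexp (-(\<omega>*y)) * (c + (\<integral>t. (1 - iexp (\<omega>*t)) * kk t \<partial>lborel))"
      using elim(2) unfolding PV_def by simp
    then show ?case using elim(1) unfolding PV_def by (simp add: field_simps)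
  qed
  interpret S: prop9_setup fV "char PV" lamf kk y c B L Bl
    by (rule prop9_setup.intro[OF fV_cont fV_B fV_L fV_int phi_def phi_bd kk_meas kk_zero m_int lam_cont lam_int lam_B hypA])
  note LM = S.lam_measure
  have setint: "(LINT t:{0<..}|lborel. complex_of_real (F t) * k t) = (\<integral>t. complex_of_real (F t) * kk t \<partial>lborel)" for F
    unfolding set_lebesgue_integral_def kk_def by (rule Bochner_Integration.integral_cong) (auto simp: indicator_def)
  have part1: "T_functional g fV y \<mu>1 \<mu>2 =
              c * complex_of_real (conv_signed fV \<mu>1 \<mu>2 y)
              + (LINT t:{0<..}|lborel.
                   complex_of_real (conv_signed fV \<mu>1 \<mu>2 y - conv_signed fV \<mu>1 \<mu>2 (y - t)) * k t)"
    if s1: "sets \<mu>1 = sets borel" and s2: "sets \<mu>2 = sets borel" and f1: "finite_measure \<mu>1" and f2: "finite_measure \<mu>2"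
    for \<mu>1 \<mu>2 :: "real measure"
  proof -
    define a where "a \<mu> x = (\<integral>z. fV (x - z) \<partial>\<mu>)" for \<mu> x
    have i1: "integrable lborel (\<lambda>t. complex_of_real (a \<mu>1 y - a \<mu>1 (y - t)) * kk t)"
      using LM(2)[OF s1 f1] by (simp add: a_def)
    have i2: "integrable lborel (\<lambda>t. complex_of_real (a \<mu>2 y - a \<mu>2 (y - t)) * kk t)"
      using LM(2)[OF s2 f2] by (simp add: a_def)
    have "T_functional g fV y \<mu>1 \<mu>2 = (\<integral>x. lamf x \<partial>\<mu>1) - (\<integral>x. lamf x \<partial>\<mu>2)"
      by (simp add: T_functional_def lamf_def)
    also have "\<dots> = (c * complex_of_real (a \<mu>1 y) + (\<integral>t. complex_of_real (a \<mu>1 y - a \<mu>1 (y - t)) * kk t \<partial>lborel))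
        - (c * complex_of_real (a \<mu>2 y) + (\<integral>t. complex_of_real (a \<mu>2 y - a \<mu>2 (y - t)) * kk t \<partial>lborel))"
      unfolding LM(1)[OF s1 f1] LM(1)[OF s2 f2] a_def ..
    also have "\<dots> = c * complex_of_real (a \<mu>1 y - a \<mu>2 y)
        + (\<integral>t. complex_of_real ((a \<mu>1 y - a \<mu>2 y) - (a \<mu>1 (y - t) - a \<mu>2 (y - t))) * kk t \<partial>lborel)"
    proof -
      have "(\<integral>t. complex_of_real ((a \<mu>1 y - a \<mu>2 y) - (a \<mu>1 (y - t) - a \<mu>2 (y - t))) * kk t \<partial>lborel)
         = (\<integral>t. complex_of_real (a \<mu>1 y - a \<mu>1 (y - t)) * kk t - complex_of_real (a \<mu>2 y - a \<mu>2 (y - t)) * kk t \<partial>lborel)"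
        by (rule Bochner_Integration.integral_cong) (auto simp: algebra_simps)
      also have "\<dots> = (\<integral>t. complex_of_real (a \<mu>1 y - a \<mu>1 (y - t)) * kk t \<partial>lborel) - (\<integral>t. complex_of_real (a \<mu>2 y - a \<mu>2 (y - t)) * kk t \<partial>lborel)"
        by (rule Bochner_Integration.integral_diff[OF i1 i2])
      finally show ?thesis by (simp add: algebra_simps)
    qed
    also have "\<dots> = c * complex_of_real (conv_signed fV \<mu>1 \<mu>2 y)
              + (LINT t:{0<..}|lborel.
                   complex_of_real (conv_signed fV \<mu>1 \<mu>2 y - conv_signed fV \<mu>1 \<mu>2 (y - t)) * k t)"
      unfolding setint conv_signed_def a_def ..
    finally show ?thesis .
  qed
  show ?thesis
  proof (intro conjI allI impI)
    fix \<mu>1 \<mu>2 :: "real measure"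
    assume "sets \<mu>1 = sets borel" "sets \<mu>2 = sets borel" "finite_measure \<mu>1" "finite_measure \<mu>2"
    then show "T_functional g fV y \<mu>1 \<mu>2 =
              c * complex_of_real (conv_signed fV \<mu>1 \<mu>2 y)
              + (LINT t:{0<..}|lborel.
                   complex_of_real (conv_signed fV \<mu>1 \<mu>2 y - conv_signed fV \<mu>1 \<mu>2 (y - t)) * k t)"
      by (rule part1)
  next
    assume pos: "fY fV (distr M borel X) y > 0"
    define PX where "PX = distr M borel X"
    have sPX: "sets PX = sets borel" by (simp add: PX_def)
    have PXfin: "finite_measure PX"
      unfolding PX_def by (rule finite_measure_distr) (simp add: assms(4))
    have P1: "T_functional g fV y PX (null_measure borel) =
              c * complex_of_real (conv_signed fV PX (null_measure borel) y)
              + (LINT t:{0<..}|lborel.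
                   complex_of_real (conv_signed fV PX (null_measure borel) y - conv_signed fV PX (null_measure borel) (y - t)) * k t)"
      by (rule part1[OF sPX _ PXfin]) (auto intro: finite_measureI)
    have cs: "conv_signed fV PX (null_measure borel) x = fY fV PX x" for x
      by (simp add: conv_signed_def fY_def)
    have T: "T_functional g fV y PX (null_measure borel) = complex_of_real (\<integral>x. g x * fV (y - x) \<partial>PX)"
      unfolding T_functional_def lam_def by (simp del: of_real_mult)
    have "complex_of_real (\<integral>x. g x * fV (y - x) \<partial>PX) = c * complex_of_real (fY fV PX y)
       + (LINT t:{0<..}|lborel. complex_of_real (fY fV PX y - fY fV PX (y - t)) * k t)"
      using P1 unfolding T cs .
    then show "complex_of_real (cond_exp_at g fV (distr M borel X) y) =
              complex_of_real (1 / fY fV (distr M borel X) y) *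
                (c * complex_of_real (fY fV (distr M borel X) y)
                 + (LINT t:{0<..}|lborel.
                      complex_of_real (fY fV (distr M borel X) y - fY fV (distr M borel X) (y - t)) * k t))"
      unfolding PX_def[symmetric] cond_exp_at_def by (simp add: divide_inverse)
  qed
qed

end
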